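(* Let $L\subset\mathbb R^3$ be a nonclosed $b$-chord-arc curve, let $0<\alpha<1$, $p>1/\alpha$, and let $f\in C(L)$. Suppose there is a constant $c>0$ such that for every $0<\delta\le 2|L|$ there exists a function $v_\delta$ harmonic in $\Omega_\delta$ satisfying $$\left(\int_L\left(\frac{\max\nolimits_{\delta}(f-v_{\delta})(M)}{\delta^{\alpha}}\right)^p\,dm_1(M)\right)^{1/p}\le c \quad\text{and}\quad \left(\int_L\left(\delta^{1-\alpha}\,\operatorname{grad}^{\ast}_{\delta} v_{\delta}(M)\right)^p\,dm_1(M)\right)^{1/p}\le c.$$ Then $f\in\Lambda^\alpha_p(L)$.
   Context: $L$ is a nonclosed curve in $\mathbb R^3$ with endpoints $A,B$; it is $b$-chord-arc ($b\ge1$) if for all distinct $M_1,M_2\in L$ the subarc $\gamma(M_1,M_2)\subset L$ with endpoints $M_1,M_2$ satisfies $|\gamma(M_1,M_2)|\le b\|M_1M_2\|$, where $|\cdot|$ denotes length. $|L|$ is the length of $L$ and $m_1$ is arc-length measure on $L$. $B_r(M)$, $\bar B_r(M)$ denote the open and closed balls of radius $r$ centered at $M$. For $f$ on $L$, $M\in L$, $r>0$: $\Delta^{\ast}f(M,r)=\sup_{N\in\bar B_r(M)\cap L}|f(N)-f(M)|$. $\Lambda^\alpha_p(L)$ is the set of functions $f$ on $L$ with $\sup_{0<r<|L|}\left(\int_L\left(\Delta^*f(M,r)/r^\alpha\right)^p dm_1(M)\right)^{1/p}<\infty$. $\Omega_\delta=\bigcup_{M\in L}B_\delta(M)$. For $v$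 harmonic in $\Omega_\delta$ and $M\in L$, $\operatorname{grad}^*_\delta v(M)=\max_{N\in\bar B_{\delta/2}(M)}|\operatorname{grad}v(N)|$. For a function $F$ on $L$, $\max_\delta F(M)=\sup_{N\in\bar B_\delta(M)\cap L}|F(N)|$; here applied to $F=f-v_\delta$ restricted to $L$. *)

theory Defs
  imports "HOL-Analysis.Analysis"
begin

type_synonym R3 = "real ^ 3"

definition curve_length :: "(real \<Rightarrow> R3) \<Rightarrow> real \<Rightarrow> real \<Rightarrow> ennreal" where
  "curve_length \<gamma> s t =
     (SUP xn \<in> {(x, n). x 0 = s \<and> x n = t \<and> (\<forall>i<n. x i \<le> x (Suc i))}.
        ennreal (\<Sum>i<snd xn. dist (\<gamma> (fst xn i)) (\<gamma> (fst xn (Suc i)))))"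

definition arclength_param :: "(real \<Rightarrow> R3) \<Rightarrow> real \<Rightarrow> bool" where
  "arclength_param \<gamma> l \<longleftrightarrow> 0 < l \<and> continuous_on {0..l} \<gamma> \<and> inj_on \<gamma> {0..l} \<and>
     (\<forall>s t. 0 \<le> s \<and> s \<le> t \<and> t \<le> l \<longrightarrow> curve_length \<gamma> s t = ennreal (t - s))"

definition chord_arc :: "real \<Rightarrow> (real \<Rightarrow> R3) \<Rightarrow> real \<Rightarrow> bool" where
  "chord_arc b \<gamma> l \<longleftrightarrow> (\<forall>s t. 0 \<le> s \<and> s < t \<and> t \<le> l \<longrightarrow>
       curve_length \<gamma> s t \<le> ennreal (b * dist (\<gamma> s) (\<gamma> t)))"

text \<open>Integral over L with respect to arc-length measure m_1 (of a nonnegative function).\<close>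
definition int_L :: "(real \<Rightarrow> R3) \<Rightarrow> real \<Rightarrow> (R3 \<Rightarrow> real) \<Rightarrow> ennreal" where
  "int_L \<gamma> l g = (\<integral>\<^sup>+ s\<in>{0..l}. ennreal (g (\<gamma> s)) \<partial>lborel)"

definition Delta_star :: "(R3 \<Rightarrow> real) \<Rightarrow> R3 set \<Rightarrow> R3 \<Rightarrow> real \<Rightarrow> real" where
  "Delta_star f L M r = (SUP N \<in> cball M r \<inter> L. \<bar>f N - f M\<bar>)"

definition Lambda :: "real \<Rightarrow> real \<Rightarrow> (real \<Rightarrow> R3) \<Rightarrow> real \<Rightarrow> (R3 \<Rightarrow> real) \<Rightarrow> bool" where
  "Lambda \<alpha> p \<gamma> l f \<longleftrightarrow> (\<exists>C. \<forall>r. 0 < r \<and> r < l \<longrightarrow>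
      int_L \<gamma> l (\<lambda>M. (Delta_star f (\<gamma> ` {0..l}) M r / r powr \<alpha>) powr p) \<le> ennreal C)"

definition Omega :: "R3 set \<Rightarrow> real \<Rightarrow> R3 set" where
  "Omega L \<delta> = (\<Union>M\<in>L. ball M \<delta>)"

definition partial_deriv :: "3 \<Rightarrow> (R3 \<Rightarrow> real) \<Rightarrow> R3 \<Rightarrow> real" where
  "partial_deriv i v x = frechet_derivative v (at x) (axis i 1)"

definition grad :: "(R3 \<Rightarrow> real) \<Rightarrow> R3 \<Rightarrow> R3" where
  "grad v x = (\<chi> i. partial_deriv i v x)"

definition harmonic_on :: "R3 set \<Rightarrow> (R3 \<Rightarrow> real) \<Rightarrow> bool" where
  "harmonic_on S v \<longleftrightarrow> open S \<and>
     (\<forall>x\<in>S. v differentiable (at x)) \<and>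
     (\<forall>i. \<forall>x\<in>S. partial_deriv i v differentiable (at x)) \<and>
     (\<forall>i j. continuous_on S (partial_deriv j (partial_deriv i v))) \<and>
     (\<forall>x\<in>S. (\<Sum>i\<in>UNIV. partial_deriv i (partial_deriv i v) x) = 0)"

definition grad_star :: "real \<Rightarrow> (R3 \<Rightarrow> real) \<Rightarrow> R3 \<Rightarrow> real" where
  "grad_star \<delta> v M = (SUP N \<in> cball M (\<delta>/2). norm (grad v N))"

definition max_delta :: "real \<Rightarrow> R3 set \<Rightarrow> (R3 \<Rightarrow> real) \<Rightarrow> R3 \<Rightarrow> real" where
  "max_delta \<delta> L F M = (SUP N \<in> cball M \<delta> \<inter> L. \<bar>F N\<bar>)"

end

theory Submission
  imports Defs
begin

lemma frechet_grad:
  fixes v :: "R3 \<Rightarrow> real"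
  assumes "v differentiable (at x)"
  shows "frechet_derivative v (at x) h = grad v x \<bullet> h"
proof -
  let ?D = "frechet_derivative v (at x)"
  have lin: "linear ?D"
    using frechet_derivative_works[THEN iffD1, OF assms] has_derivative_linear by blast
  have "?D h = ?D (\<Sum>i\<in>UNIV. h$i *\<^sub>R axis i 1)"
    using basis_expansion[of h] by (simp add: scalar_mult_eq_scaleR)
  also have "\<dots> = (\<Sum>i\<in>UNIV. h$i * ?D (axis i 1))"
    using lin by (simp add: linear_sum linear_scale)
  also have "\<dots> = grad v x \<bullet> h"
    by (simp add: grad_def partial_deriv_def inner_vec_def mult.commute)
  finally show ?thesis .
qed

lemma deriv_bound:
  fixes v :: "R3 \<Rightarrow> real"
  assumes "v differentiable (at x)"
  shows "\<bar>frechet_derivative v (at x) h\<bar> \<le> norm (grad v x) * norm h"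
  by (simp add: frechet_grad[OF assms] Cauchy_Schwarz_ineq2)

lemma seg_bound:
  fixes v :: "R3 \<Rightarrow> real" and M N :: R3
  assumes S: "open S" "cball M r \<subseteq> S" and dif: "\<forall>x\<in>S. v differentiable (at x)"
    and N: "dist M N \<le> r"
    and G: "\<And>x. x \<in> ball M r \<Longrightarrow> norm (grad v x) \<le> G" and G0: "0 \<le> G"
  shows "\<bar>v N - v M\<bar> \<le> r * G"
proof (cases "N = M")
  case True then show ?thesis using G0 N by simp
next
  case False
  define \<phi> where "\<phi> t = v (M + t *\<^sub>R (N - M))" for t :: real
  have inS: "M + t *\<^sub>R (N - M) \<in> cball M r" if "0 \<le> t" "t \<le> 1" for t
  proof -
    have "dist M (M + t *\<^sub>R (N - M)) = t * norm (N - M)"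
      using that by (simp add: dist_norm)
    also have "\<dots> \<le> 1 * dist M N" using that by (intro mult_mono) (auto simp: dist_norm norm_minus_commute)
    finally show ?thesis using N by simp
  qed
  have inB: "M + t *\<^sub>R (N - M) \<in> ball M r" if "0 < t" "t < 1" for t
  proof -
    have "dist M (M + t *\<^sub>R (N - M)) = t * norm (N - M)"
      using that by (simp add: dist_norm)
    also have "\<dots> < 1 * dist M N"
    proof -
      have "0 < norm (N - M)" using False by simp
      from mult_strict_right_mono[OF that(2) this] show ?thesis by (simp add: dist_norm norm_minus_commute)
    qed
    finally show ?thesis using N by simp
  qed
  have vcont: "continuous_on S v"
    using dif differentiable_at_imp_differentiable_on differentiable_imp_continuous_on by blast
  have cont: "continuous_on {0..1} \<phi>"
    unfolding \<phi>_def
    by (rule continuous_on_compose2[OF vcont]) (use inS S in \<open>auto intro!: continuous_intros\<close>)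
  have der: "(\<phi> has_real_derivative frechet_derivative v (at (M + t *\<^sub>R (N - M))) (N - M)) (at t)"
    if "0 < t" "t < 1" for t
  proof -
    let ?x = "M + t *\<^sub>R (N - M)"
    have dx: "v differentiable (at ?x)" using dif inB[OF that] S ball_subset_cball by blast
    have vd: "(v has_derivative frechet_derivative v (at ?x)) (at ?x)"
      using frechet_derivative_works dx by blast
    have ld: "((\<lambda>t. M + t *\<^sub>R (N - M)) has_derivative (\<lambda>s. s *\<^sub>R (N - M))) (at t)"
      by (auto intro!: derivative_eq_intros)
    have "(\<phi> has_derivative (\<lambda>s. frechet_derivative v (at ?x) (s *\<^sub>R (N - M)))) (at t)"
      unfolding \<phi>_def using has_derivative_compose[OF ld vd] by (simp add: o_def)
    moreover have "linear (frechet_derivative v (at ?x))"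
      using vd has_derivative_linear by blast
    ultimately have "(\<phi> has_derivative (\<lambda>s. s * frechet_derivative v (at ?x) (N - M))) (at t)"
      by (simp add: linear_scale)
    then show ?thesis unfolding has_field_derivative_def by (simp add: mult.commute[of _ "frechet_derivative v (at ?x) (N - M)"])
  qed
  obtain l z where z: "0 < z" "z < 1" "DERIV \<phi> z :> l" "\<phi> 1 - \<phi> 0 = (1 - 0) * l"
    using MVT[of 0 1 \<phi>] cont der real_differentiable_def by force
  let ?x = "M + z *\<^sub>R (N - M)"
  have l: "l = frechet_derivative v (at ?x) (N - M)"
    using DERIV_unique z(3) der[OF z(1,2)] by blast
  have dx: "v differentiable (at ?x)" using dif inB[OF z(1,2)] S ball_subset_cball by blast
  have "\<bar>v N - v M\<bar> = \<bar>l\<bar>" using z(4) by (simp add: \<phi>_def)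
  also have "\<dots> \<le> norm (grad v ?x) * norm (N - M)" unfolding l by (rule deriv_bound[OF dx])
  also have "\<dots> \<le> G * r"
    using G[OF inB[OF z(1,2)]] N G0 by (intro mult_mono) (auto simp: dist_norm norm_minus_commute)
  finally show ?thesis by (simp add: mult.commute)
qed

lemma meas_sup:
  fixes c :: "real \<Rightarrow> R3" and g :: "R3 \<Rightarrow> real"
  assumes c: "continuous_on UNIV c" and ne: "\<And>s. ball (c s) \<rho> \<inter> K \<noteq> {}"
    and bdd: "\<And>s. bdd_above (g ` (ball (c s) \<rho> \<inter> K))"
  shows "(\<lambda>s. SUP N\<in>ball (c s) \<rho> \<inter> K. g N) \<in> borel_measurable borel"
proof -
  have op: "open (c -` B)" if "open B" for B
    using continuous_on_open_vimage[of UNIV c] c that by auto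
  have "open {s. a < (SUP N\<in>ball (c s) \<rho> \<inter> K. g N)}" for a
  proof -
    have eq: "{s. a < (SUP N\<in>ball (c s) \<rho> \<inter> K. g N)} = (\<Union>N\<in>{N\<in>K. a < g N}. c -` ball N \<rho>)"
      using less_cSUP_iff[OF ne bdd] by (auto simp: dist_commute)
    show ?thesis unfolding eq by (intro open_UN ballI op open_ball)
  qed
  then show ?thesis
    unfolding borel_measurable_iff_greater by auto
qed

lemma powr_sum_le:
  fixes x y p :: real
  assumes "0 \<le> x" "0 \<le> y" "0 < p"
  shows "(x + y) powr p \<le> 2 powr p * (x powr p + y powr p)"
proof -
  have "(x + y) powr p \<le> (2 * max x y) powr p"
    using assms by (intro powr_mono2) auto
  also have "\<dots> = 2 powr p * (max x y) powr p"
    using assms by (simp add: powr_mult)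
  also have "\<dots> \<le> 2 powr p * (x powr p + y powr p)"
    by (intro mult_left_mono) (auto simp: max_def)
  finally show ?thesis .
qed

lemma arith_bound:
  fixes D A B r \<alpha> p :: real
  assumes r: "0 < r" and a: "0 < \<alpha>" "\<alpha> < 1" and p: "0 < p"
    and D: "0 \<le> D" and A: "0 \<le> A" and B: "0 \<le> B" and DB: "D \<le> 2 * A + r * B"
  shows "(D / r powr \<alpha>) powr p \<le> 8 powr p * ((A / (2*r) powr \<alpha>) powr p + ((2*r) powr (1-\<alpha>) * B) powr p)"
proof -
  define a where "a = A / (2*r) powr \<alpha>"
  define b where "b = (2*r) powr (1-\<alpha>) * B"
  have a0: "0 \<le> a" and b0: "0 \<le> b" using A B by (auto simp: a_def b_def)
  have rp: "0 < r powr \<alpha>" using r by simp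
  have "(2*r) powr \<alpha> = 2 powr \<alpha> * r powr \<alpha>" using r by (simp add: powr_mult)
  also have "\<dots> \<le> 2 * r powr \<alpha>"
  proof -
    have "2 powr \<alpha> \<le> 2 powr 1" using a by (intro powr_mono) auto
    then show ?thesis using rp by (intro mult_right_mono) auto
  qed
  finally have h1: "(2*r) powr \<alpha> \<le> 2 * r powr \<alpha>" .
  have t1: "2 * A / r powr \<alpha> \<le> 4 * a"
  proof -
    have "2 * A / r powr \<alpha> = 4 * A / (2 * r powr \<alpha>)" using rp by (simp add: field_simps)
    also have "\<dots> \<le> 4 * A / (2*r) powr \<alpha>"
      using h1 A r by (intro divide_left_mono) auto
    finally show ?thesis by (simp add: a_def)
  qed
  have t2: "r * B / r powr \<alpha> \<le> b"
  proof -
    have "r * B / r powr \<alpha> = r powr (1 - \<alpha>) * B"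
      using r by (simp add: powr_diff)
    also have "\<dots> \<le> (2*r) powr (1-\<alpha>) * B"
      using r a B by (intro mult_right_mono powr_mono2) auto
    finally show ?thesis by (simp add: b_def)
  qed
  have "D / r powr \<alpha> \<le> (2 * A + r * B) / r powr \<alpha>"
    using DB rp by (simp add: divide_right_mono)
  also have "\<dots> = 2 * A / r powr \<alpha> + r * B / r powr \<alpha>" by (simp add: add_divide_distrib)
  also have "\<dots> \<le> 4 * a + 4 * b" using t1 t2 b0 by linarith
  finally have h: "D / r powr \<alpha> \<le> 4 * a + 4 * b" .
  have "(D / r powr \<alpha>) powr p \<le> (4 * a + 4 * b) powr p"
    using h D rp p by (intro powr_mono2) auto
  also have "\<dots> \<le> 2 powr p * ((4*a) powr p + (4*b) powr p)"
    using a0 b0 p by (intro powr_sum_le) auto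
  also have "\<dots> = 2 powr p * 4 powr p * (a powr p + b powr p)"
    using a0 b0 by (simp add: powr_mult algebra_simps)
  also have "2 powr p * 4 powr p = (8::real) powr p"
    by (simp add: powr_mult[symmetric])
  finally show ?thesis by (simp add: a_def b_def)
qed

theorem theorem2:
  fixes \<gamma> :: "real \<Rightarrow> R3" and l b \<alpha> p :: real and f :: "R3 \<Rightarrow> real"
  assumes "arclength_param \<gamma> l"
    and "b \<ge> 1" and "chord_arc b \<gamma> l"
    and "0 < \<alpha>" and "\<alpha> < 1" and "p > 1 / \<alpha>"
    and "continuous_on (\<gamma> ` {0..l}) f"
    and "\<exists>c>0. \<forall>\<delta>. 0 < \<delta> \<and> \<delta> \<le> 2 * l \<longrightarrow>
           (\<exists>v. harmonic_on (Omega (\<gamma> ` {0..l}) \<delta>) v \<and>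
              int_L \<gamma> l (\<lambda>M. (max_delta \<delta> (\<gamma> ` {0..l}) (\<lambda>N. f N - v N) M / \<delta> powr \<alpha>) powr p)
                \<le> ennreal (c powr p) \<and>
              int_L \<gamma> l (\<lambda>M. (\<delta> powr (1 - \<alpha>) * grad_star \<delta> v M) powr p)
                \<le> ennreal (c powr p))"
  shows "Lambda \<alpha> p \<gamma> l f"
proof -
  define L where "L = \<gamma> ` {0..l}"
  have l0: "0 < l" and gc: "continuous_on {0..l} \<gamma>"
    using assms(1) by (auto simp: arclength_param_def)
  have cL: "compact L" unfolding L_def by (intro compact_continuous_image gc) simp
  have a: "0 < \<alpha>" "\<alpha> < 1" using assms by auto
  have p: "0 < p" using assms(4,6) by (smt (verit) divide_pos_pos)
  have fc: "continuous_on L f" using assms(7) by (simp add: L_def)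
  obtain c where c0: "c > 0" and H: "\<And>\<delta>. 0 < \<delta> \<Longrightarrow> \<delta> \<le> 2 * l \<Longrightarrow>
           (\<exists>v. harmonic_on (Omega L \<delta>) v \<and>
              int_L \<gamma> l (\<lambda>M. (max_delta \<delta> L (\<lambda>N. f N - v N) M / \<delta> powr \<alpha>) powr p)
                \<le> ennreal (c powr p) \<and>
              int_L \<gamma> l (\<lambda>M. (\<delta> powr (1 - \<alpha>) * grad_star \<delta> v M) powr p)
                \<le> ennreal (c powr p))"
    using assms(8) unfolding L_def by blast
  define cl where "cl s = max 0 (min l s)" for s :: real
  define \<gamma>' where "\<gamma>' = \<gamma> \<circ> cl"
  have cl_in: "cl s \<in> {0..l}" for s using l0 by (auto simp: cl_def)
  have cl_id: "s \<in> {0..l} \<Longrightarrow> cl s = s" for s by (auto simp: cl_def)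
  have clc: "continuous_on UNIV cl" unfolding cl_def by (intro continuous_intros)
  have g'c: "continuous_on UNIV \<gamma>'"
    unfolding \<gamma>'_def
    by (rule continuous_on_compose[OF clc continuous_on_subset[OF gc]]) (use cl_in in blast)
  have g'L: "\<gamma>' s \<in> L" for s using cl_in by (auto simp: \<gamma>'_def L_def)
  show ?thesis unfolding Lambda_def
  proof (intro exI allI impI)
    fix r assume r: "0 < r \<and> r < l"
    define \<delta> where "\<delta> = 2 * r"
    have d0: "0 < \<delta>" and dl: "\<delta> \<le> 2 * l" using r by (auto simp: \<delta>_def)
    obtain v where hv: "harmonic_on (Omega L \<delta>) v"
      and IA: "int_L \<gamma> l (\<lambda>M. (max_delta \<delta> L (\<lambda>N. f N - v N) M / \<delta> powr \<alpha>) powr p) \<le> ennreal (c powr p)"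
      and IB: "int_L \<gamma> l (\<lambda>M. (\<delta> powr (1 - \<alpha>) * grad_star \<delta> v M) powr p) \<le> ennreal (c powr p)"
      using H[OF d0 dl] by blast
    define \<Omega> where "\<Omega> = Omega L \<delta>"
    have o\<Omega>: "open \<Omega>" using hv by (simp add: harmonic_on_def \<Omega>_def)
    have ball\<Omega>: "M \<in> L \<Longrightarrow> ball M \<delta> \<subseteq> \<Omega>" for M by (auto simp: \<Omega>_def Omega_def)
    have L\<Omega>: "L \<subseteq> \<Omega>" using ball\<Omega> d0 by force
    have dif: "\<forall>x\<in>\<Omega>. v differentiable (at x)" using hv by (simp add: harmonic_on_def \<Omega>_def)
    have vc: "continuous_on \<Omega> v"
      using dif differentiable_at_imp_differentiable_on differentiable_imp_continuous_on by blast
    have pc: "continuous_on \<Omega> (partial_deriv i v)" for i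
      using hv differentiable_at_imp_differentiable_on differentiable_imp_continuous_on
      by (metis \<Omega>_def harmonic_on_def)
    have gradc: "continuous_on \<Omega> (grad v)"
      unfolding grad_def by (intro continuous_on_vec_lambda pc)
    obtain K1 where K1: "\<And>N. N \<in> L \<Longrightarrow> \<bar>f N - v N\<bar> \<le> K1"
    proof -
      have "compact ((\<lambda>N. f N - v N) ` L)"
        using cL fc continuous_on_subset[OF vc L\<Omega>]
        by (intro compact_continuous_image continuous_intros) auto
      then obtain K where "\<forall>x\<in>(\<lambda>N. f N - v N) ` L. norm x \<le> K"
        using compact_imp_bounded bounded_iff by metis
      then show ?thesis using that by auto
    qed
    have K2: "\<exists>K. \<forall>N\<in>cball M (\<delta>/2). norm (grad v N) \<le> K" if "M \<in> L" for M
    proof -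
      have sub: "cball M (\<delta>/2) \<subseteq> \<Omega>" by (rule subset_trans[OF _ ball\<Omega>[OF that]]) (use d0 in auto)
      have "compact (grad v ` cball M (\<delta>/2))"
        by (intro compact_continuous_image continuous_on_subset[OF gradc sub]) simp
      then show ?thesis using compact_imp_bounded bounded_iff by (metis image_eqI)
    qed
    define A' where "A' M = (SUP N\<in>ball M \<delta> \<inter> L. \<bar>f N - v N\<bar>)" for M
    define B' where "B' M = (SUP N\<in>ball M (\<delta>/2) \<inter> UNIV. norm (grad v N))" for M
    have bA: "bdd_above ((\<lambda>N. \<bar>f N - v N\<bar>) ` (S \<inter> L))" for S
      by (rule bdd_aboveI2[where M=K1]) (use K1 in auto)
    have bB: "bdd_above ((\<lambda>N. norm (grad v N)) ` (ball M (\<delta>/2) \<inter> UNIV))" if hM: "M \<in> L" for M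
    proof -
      obtain K where "\<forall>N\<in>cball M (\<delta>/2). norm (grad v N) \<le> K" using K2[OF hM] by blast
      then show ?thesis by (intro bdd_aboveI2[where M=K]) auto
    qed
    have bB': "bdd_above ((\<lambda>N. norm (grad v N)) ` cball M (\<delta>/2))" if hM: "M \<in> L" for M
    proof -
      obtain K where "\<forall>N\<in>cball M (\<delta>/2). norm (grad v N) \<le> K" using K2[OF hM] by blast
      then show ?thesis by (intro bdd_aboveI2[where M=K]) auto
    qed
    have A'ge: "\<bar>f N - v N\<bar> \<le> A' M" if "N \<in> ball M \<delta> \<inter> L" for M N
      unfolding A'_def by (rule cSUP_upper[OF that bA])
    have B'ge: "norm (grad v N) \<le> B' M" if "M \<in> L" "N \<in> ball M (\<delta>/2)" for M N
      unfolding B'_def by (rule cSUP_upper[OF _ bB[OF that(1)]]) (use that in auto)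
    have A'0: "0 \<le> A' M" if "M \<in> L" for M
      using A'ge[of M M] that d0 by force
    have B'0: "0 \<le> B' M" if "M \<in> L" for M
    proof -
      have "M \<in> ball M (\<delta>/2)" using d0 by simp
      then show ?thesis using B'ge[of M M] that norm_ge_zero order_trans by blast
    qed
    have A'le: "A' M \<le> max_delta \<delta> L (\<lambda>N. f N - v N) M" if "M \<in> L" for M
      unfolding A'_def max_delta_def
      by (rule cSUP_subset_mono) (use that d0 bA[of "cball M \<delta>"] in \<open>auto simp: Int_commute\<close>)
    have B'le: "B' M \<le> grad_star \<delta> v M" if "M \<in> L" for M
      unfolding B'_def grad_star_def
      by (rule cSUP_subset_mono) (use that d0 bB'[OF that] in auto)
    have Dbound: "\<bar>f N - f M\<bar> \<le> 2 * A' M + r * B' M" if "M \<in> L" "N \<in> cball M r \<inter> L" for M N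
    proof -
      have N1: "N \<in> ball M \<delta> \<inter> L" using that r by (auto simp: \<delta>_def)
      have M1: "M \<in> ball M \<delta> \<inter> L" using that d0 by auto
      have sub: "cball M r \<subseteq> \<Omega>" using ball\<Omega>[OF that(1)] r by (force simp: \<delta>_def)
      have "\<bar>v N - v M\<bar> \<le> r * B' M"
        by (rule seg_bound[OF o\<Omega> sub dif]) (use that B'ge B'0 in \<open>auto simp: \<delta>_def\<close>)
      moreover have "\<bar>f N - v N\<bar> \<le> A' M" "\<bar>f M - v M\<bar> \<le> A' M" using A'ge N1 M1 by auto
      ultimately show ?thesis by linarith
    qed
    have Dle: "Delta_star f L M r \<le> 2 * A' M + r * B' M" if "M \<in> L" for M
    proof -
      have "M \<in> cball M r \<inter> L" using that r by simp
      then show ?thesis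
        unfolding Delta_star_def by (intro cSUP_least) (use that Dbound in blast)+
    qed
    have D0: "0 \<le> Delta_star f L M r" if "M \<in> L" for M
    proof -
      have "\<bar>f M - f M\<bar> \<le> Delta_star f L M r"
        unfolding Delta_star_def
        by (rule cSUP_upper) (use that r Dbound[OF that] in \<open>auto intro!: bdd_aboveI2[where M="2 * A' M + r * B' M"]\<close>)
      then show ?thesis by simp
    qed
    define aF where "aF M = (A' M / \<delta> powr \<alpha>) powr p" for M
    define bF where "bF M = (\<delta> powr (1 - \<alpha>) * B' M) powr p" for M
    have pw: "(Delta_star f L M r / r powr \<alpha>) powr p \<le> 8 powr p * (aF M + bF M)" if "M \<in> L" for M
      unfolding aF_def bF_def \<delta>_def
      by (rule arith_bound) (use r a p D0 A'0 B'0 Dle that in \<open>auto simp: \<delta>_def\<close>)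
    have mA: "(\<lambda>s. A' (\<gamma>' s)) \<in> borel_measurable borel"
      unfolding A'_def by (rule meas_sup[OF g'c], metis IntI centre_in_ball equals0D g'L d0, rule bA)
    have mB: "(\<lambda>s. B' (\<gamma>' s)) \<in> borel_measurable borel"
      unfolding B'_def by (rule meas_sup[OF g'c], use d0 in simp, rule bB[OF g'L])
    have maF: "(\<lambda>s. ennreal (aF (\<gamma>' s)) * indicator {0..l} s) \<in> borel_measurable lborel"
      unfolding aF_def using mA by measurable
    have mbF: "(\<lambda>s. ennreal (bF (\<gamma>' s)) * indicator {0..l} s) \<in> borel_measurable lborel"
      unfolding bF_def using mB by measurable
    show "int_L \<gamma> l (\<lambda>M. (Delta_star f (\<gamma> ` {0..l}) M r / r powr \<alpha>) powr p) \<le> ennreal (2 * 8 powr p * c powr p)"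
    proof -
      define ind where "ind s = (indicator {0..l} s :: ennreal)" for s
      have aF0: "0 \<le> aF M" and bF0: "0 \<le> bF M" for M by (auto simp: aF_def bF_def)
      have gg: "s \<in> {0..l} \<Longrightarrow> \<gamma>' s = \<gamma> s \<and> \<gamma> s \<in> L" for s
        by (auto simp: \<gamma>'_def cl_id L_def)
      have "int_L \<gamma> l (\<lambda>M. (Delta_star f (\<gamma> ` {0..l}) M r / r powr \<alpha>) powr p)
          \<le> (\<integral>\<^sup>+ s. ennreal (8 powr p) * (ennreal (aF (\<gamma>' s)) * ind s + ennreal (bF (\<gamma>' s)) * ind s) \<partial>lborel)"
        unfolding int_L_def L_def[symmetric]
      proof (rule nn_integral_mono)
        fix s
        show "ennreal ((Delta_star f L (\<gamma> s) r / r powr \<alpha>) powr p) * indicator {0..l} s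
           \<le> ennreal (8 powr p) * (ennreal (aF (\<gamma>' s)) * ind s + ennreal (bF (\<gamma>' s)) * ind s)"
        proof (cases "s \<in> {0..l}")
          case True
          then have g: "\<gamma>' s = \<gamma> s" "\<gamma> s \<in> L" using gg by auto
          have "ennreal ((Delta_star f L (\<gamma> s) r / r powr \<alpha>) powr p)
              \<le> ennreal (8 powr p * (aF (\<gamma> s) + bF (\<gamma> s)))"
            using pw[OF g(2)] by (rule ennreal_leI)
          also have "\<dots> = ennreal (8 powr p) * (ennreal (aF (\<gamma> s)) + ennreal (bF (\<gamma> s)))"
            using aF0 bF0 by (simp add: ennreal_mult ennreal_plus)
          finally show ?thesis using True g by (simp add: ind_def)
        next
          case False then show ?thesis by (simp add: ind_def)
        qed
      qed
      also have I2: "\<dots> = ennreal (8 powr p) * ((\<integral>\<^sup>+ s. ennreal (aF (\<gamma>' s)) * ind s \<partial>lborel)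
                        + (\<integral>\<^sup>+ s. ennreal (bF (\<gamma>' s)) * ind s \<partial>lborel))"
        using maF mbF unfolding ind_def by (simp add: nn_integral_cmult nn_integral_add)
      moreover have Ia: "(\<integral>\<^sup>+ s. ennreal (aF (\<gamma>' s)) * ind s \<partial>lborel) \<le> ennreal (c powr p)"
      proof -
        have "(\<integral>\<^sup>+ s. ennreal (aF (\<gamma>' s)) * ind s \<partial>lborel)
            \<le> int_L \<gamma> l (\<lambda>M. (max_delta \<delta> L (\<lambda>N. f N - v N) M / \<delta> powr \<alpha>) powr p)"
          unfolding int_L_def
        proof (rule nn_integral_mono)
          fix s
          show "ennreal (aF (\<gamma>' s)) * ind s \<le> ennreal ((max_delta \<delta> L (\<lambda>N. f N - v N) (\<gamma> s) / \<delta> powr \<alpha>) powr p) * indicator {0..l} s"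
          proof (cases "s \<in> {0..l}")
            case True
            then have g: "\<gamma>' s = \<gamma> s" "\<gamma> s \<in> L" using gg by auto
            have "aF (\<gamma> s) \<le> (max_delta \<delta> L (\<lambda>N. f N - v N) (\<gamma> s) / \<delta> powr \<alpha>) powr p"
              unfolding aF_def using A'le[OF g(2)] A'0[OF g(2)] p d0
              by (intro powr_mono2 divide_right_mono) auto
            then show ?thesis using True g by (simp add: ind_def ennreal_leI)
          next
            case False then show ?thesis by (simp add: ind_def)
          qed
        qed
        then show ?thesis using IA by simp
      qed
      moreover have Ib: "(\<integral>\<^sup>+ s. ennreal (bF (\<gamma>' s)) * ind s \<partial>lborel) \<le> ennreal (c powr p)"
      proof -
        have "(\<integral>\<^sup>+ s. ennreal (bF (\<gamma>' s)) * ind s \<partial>lborel)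
            \<le> int_L \<gamma> l (\<lambda>M. (\<delta> powr (1 - \<alpha>) * grad_star \<delta> v M) powr p)"
          unfolding int_L_def
        proof (rule nn_integral_mono)
          fix s
          show "ennreal (bF (\<gamma>' s)) * ind s \<le> ennreal ((\<delta> powr (1 - \<alpha>) * grad_star \<delta> v (\<gamma> s)) powr p) * indicator {0..l} s"
          proof (cases "s \<in> {0..l}")
            case True
            then have g: "\<gamma>' s = \<gamma> s" "\<gamma> s \<in> L" using gg by auto
            have "bF (\<gamma> s) \<le> (\<delta> powr (1 - \<alpha>) * grad_star \<delta> v (\<gamma> s)) powr p"
              unfolding bF_def using B'le[OF g(2)] B'0[OF g(2)] p d0
              by (intro powr_mono2 mult_left_mono) auto
            then show ?thesis using True g by (simp add: ind_def ennreal_leI)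
          next
            case False then show ?thesis by (simp add: ind_def)
          qed
        qed
        then show ?thesis using IB by simp
      qed
      moreover have "ennreal (8 powr p) * (ennreal (c powr p) + ennreal (c powr p)) = ennreal (2 * 8 powr p * c powr p)"
        by (simp add: ennreal_mult[symmetric] ennreal_plus[symmetric] mult_ac)
      ultimately show ?thesis
        by (smt (verit) add_mono mult_left_mono order_trans zero_le)
    qed
  qed
qed

end
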